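(* For any set of $n$ points in the plane there is a conflict-free coloring with respect to axis-parallel rectangles using $O(\sqrt{n}\log n)$ colors that allows weak deletions at the cost of one recoloring per deletion.
   Context: A coloring of a point set $P$ is conflict-free with respect to rectangles if every axis-parallel rectangle containing at least one point of $P$ contains a point whose color is unique among the points of $P$ it contains. Allowing weak deletions at cost one means: points can be deleted one at a time, each deletion recoloring at most one remaining point, such that the coloring remains valid and the number of colors never exceeds the initial bound. *)

theory Defs
  imports Complex_Main
begin

type_synonym point = "real \<times> real"

definition rect :: "real \<Rightarrow> real \<Rightarrow> real \<Rightarrow> real \<Rightarrow> point set" where
  "rect a1 b1 a2 b2 = {p. a1 \<le> fst p \<and> fst p \<le> b1 \<and> a2 \<le> snd p \<and> snd p \<le> b2}"

definition conflict_free_rect :: "point set \<Rightarrow> (point \<Rightarrow> nat) \<Rightarrow> bool" where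
  "conflict_free_rect S c \<longleftrightarrow>
     (\<forall>a1 b1 a2 b2. rect a1 b1 a2 b2 \<inter> S \<noteq> {} \<longrightarrow>
        (\<exists>p \<in> rect a1 b1 a2 b2 \<inter> S. \<forall>q \<in> rect a1 b1 a2 b2 \<inter> S. q \<noteq> p \<longrightarrow> c q \<noteq> c p))"

inductive weak_del :: "nat \<Rightarrow> point set \<Rightarrow> (point \<Rightarrow> nat) \<Rightarrow> bool" for k where
  "\<lbrakk> finite S; conflict_free_rect S c; card (c ` S) \<le> k;
     \<forall>p \<in> S. \<exists>c'. card {q \<in> S - {p}. c' q \<noteq> c q} \<le> 1 \<and> weak_del k (S - {p}) c' \<rbrakk>
   \<Longrightarrow> weak_del k S c"

end

theory Submission
  imports Defs
begin


definition btw :: "point \<Rightarrow> point \<Rightarrow> point \<Rightarrow> bool" where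
  "btw a b x \<longleftrightarrow> (\<forall>a1 b1 a2 b2. a \<in> rect a1 b1 a2 b2 \<longrightarrow> b \<in> rect a1 b1 a2 b2 \<longrightarrow> x \<in> rect a1 b1 a2 b2)"

definition chn :: "(nat \<Rightarrow> nat) \<Rightarrow> point set \<Rightarrow> (point \<Rightarrow> nat) \<Rightarrow> nat \<Rightarrow> point set" where
  "chn ch S c j = {x\<in>S. ch (c x) = j}"

definition cvx :: "(point \<Rightarrow> real) \<Rightarrow> point set \<Rightarrow> point set \<Rightarrow> bool" where
  "cvx f A T \<longleftrightarrow> (\<forall>a\<in>T. \<forall>b\<in>T. \<forall>x\<in>A. f a \<le> f x \<longrightarrow> f x \<le> f b \<longrightarrow> x \<in> T)"

definition Inv :: "(nat \<Rightarrow> nat) \<Rightarrow> (nat \<Rightarrow> point \<Rightarrow> real) \<Rightarrow> point set \<Rightarrow> (point \<Rightarrow> nat) \<Rightarrow> bool" where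
  "Inv ch K S c \<longleftrightarrow> finite S \<and>
    (\<forall>j. \<forall>a\<in>chn ch S c j. \<forall>b\<in>chn ch S c j. \<forall>x\<in>chn ch S c j. K j a \<le> K j x \<longrightarrow> K j x \<le> K j b \<longrightarrow> btw a b x) \<and>
    (\<forall>j T. T \<subseteq> chn ch S c j \<longrightarrow> T \<noteq> {} \<longrightarrow> cvx (K j) (chn ch S c j) T \<longrightarrow> (\<exists>m\<in>T. \<forall>t\<in>T. t \<noteq> m \<longrightarrow> c t < c m))"

lemma Inv_cf:
  assumes "Inv ch K S c" shows "conflict_free_rect S c"
  unfolding conflict_free_rect_def
proof (intro allI impI)
  fix a1 b1 a2 b2
  let ?R = "rect a1 b1 a2 b2"
  assume ne: "?R \<inter> S \<noteq> {}"
  then obtain p0 where p0: "p0 \<in> ?R \<inter> S" by blast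
  define j where "j = ch (c p0)"
  define T where "T = ?R \<inter> chn ch S c j"
  have T1: "T \<subseteq> chn ch S c j" unfolding T_def by blast
  have T2: "T \<noteq> {}" using p0 unfolding T_def chn_def j_def by blast
  have T3: "cvx (K j) (chn ch S c j) T"
    unfolding cvx_def
  proof (intro ballI impI)
    fix a b x assume a: "a \<in> T" and b: "b \<in> T" and x: "x \<in> chn ch S c j"
      and "K j a \<le> K j x" "K j x \<le> K j b"
    then have "btw a b x" using assms T1 unfolding Inv_def by blast
    then show "x \<in> T" using a b x unfolding T_def btw_def by blast
  qed
  obtain m where m: "m \<in> T" and mu: "\<forall>t\<in>T. t \<noteq> m \<longrightarrow> c t < c m"
    using assms T1 T2 T3 unfolding Inv_def by blast
  show "\<exists>p\<in>?R \<inter> S. \<forall>q\<in>?R \<inter> S. q \<noteq> p \<longrightarrow> c q \<noteq> c p"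
  proof (intro bexI ballI impI)
    show "m \<in> ?R \<inter> S" using m unfolding T_def chn_def by blast
    fix q assume q: "q \<in> ?R \<inter> S" "q \<noteq> m"
    show "c q \<noteq> c m"
    proof (cases "ch (c q) = j")
      case True
      then have "q \<in> T" using q unfolding T_def chn_def by blast
      then show ?thesis using mu q by fastforce
    next
      case False
      have "ch (c m) = j" using m unfolding T_def chn_def by blast
      then show ?thesis using False by metis
    qed
  qed
qed

lemma nb_exists:
  fixes f :: "point \<Rightarrow> real"
  assumes "finite A" "A \<noteq> {}"
  shows "\<exists>q\<in>A. \<forall>x\<in>A. (f x \<le> f p \<longrightarrow> f x \<le> f q) \<and> (f p \<le> f x \<longrightarrow> f q \<le> f x)"
proof (cases "{x\<in>A. f x \<le> f p} = {}")
  case True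
  obtain q where q: "q \<in> A" "f q = Min (f ` A)"
    using assms by (metis (mono_tags, lifting) Min_in finite_imageI image_iff image_is_empty)
  have "\<forall>x\<in>A. f q \<le> f x" using q assms by simp
  then show ?thesis using q True by blast
next
  case False
  let ?L = "{x\<in>A. f x \<le> f p}"
  have fL: "finite ?L" using assms by simp
  obtain q where q: "q \<in> ?L" "f q = Max (f ` ?L)"
    using fL False by (metis (mono_tags, lifting) Max_in finite_imageI image_iff image_is_empty)
  have h: "\<forall>x\<in>?L. f x \<le> f q" using q fL by simp
  have qa: "q \<in> A" "f q \<le> f p" using q by auto
  have "\<forall>x\<in>A. (f x \<le> f p \<longrightarrow> f x \<le> f q) \<and> (f p \<le> f x \<longrightarrow> f q \<le> f x)"
    using h qa(2) by auto
  then show ?thesis using qa(1) by blast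
qed

lemma Inv_del:
  assumes I: "Inv ch K S c" and p: "p \<in> S"
  shows "\<exists>c'. card {x\<in>S-{p}. c' x \<noteq> c x} \<le> 1 \<and> Inv ch K (S-{p}) c' \<and> c' ` (S-{p}) \<subseteq> c ` S"
proof -
  define j where "j = ch (c p)"
  define A where "A = chn ch S c j - {p}"
  have fS: "finite S" using I unfolding Inv_def by blast
  have pj: "p \<in> chn ch S c j" using p unfolding chn_def j_def by blast
  obtain q where qj: "q \<in> chn ch S c j"
    and qA: "A \<noteq> {} \<Longrightarrow> q \<in> A \<and> (\<forall>x\<in>A. (K j x \<le> K j p \<longrightarrow> K j x \<le> K j q) \<and> (K j p \<le> K j x \<longrightarrow> K j q \<le> K j x))"
  proof (cases "A = {}")
    case True then show ?thesis using that pj by blast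
  next
    case False
    have "finite A" using fS unfolding A_def chn_def by simp
    then obtain q where "q \<in> A \<and> (\<forall>x\<in>A. (K j x \<le> K j p \<longrightarrow> K j x \<le> K j q) \<and> (K j p \<le> K j x \<longrightarrow> K j q \<le> K j x))"
      using nb_exists[OF _ False] by blast
    then show ?thesis using that A_def by blast
  qed
  define c' where "c' = c(q := max (c q) (c p))"
  have chq: "ch (c q) = j" using qj unfolding chn_def by blast
  have chc': "ch (c' x) = ch (c x)" for x
    unfolding c'_def using chq j_def by (simp add: max_def)
  have chn': "chn ch (S-{p}) c' i = chn ch S c i - {p}" for i
    unfolding chn_def using chc' by auto
  have card: "card {x\<in>S-{p}. c' x \<noteq> c x} \<le> 1"
  proof -
    have "{x\<in>S-{p}. c' x \<noteq> c x} \<subseteq> {q}" unfolding c'_def by auto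
    then have "card {x\<in>S-{p}. c' x \<noteq> c x} \<le> card {q}" by (intro card_mono) auto
    then show ?thesis by simp
  qed
  have img: "c' ` (S-{p}) \<subseteq> c ` S"
    using qj p unfolding c'_def chn_def by (auto simp: max_def)
  have oldRC: "\<And>i a b x. a \<in> chn ch S c i \<Longrightarrow> b \<in> chn ch S c i \<Longrightarrow> x \<in> chn ch S c i \<Longrightarrow>
      K i a \<le> K i x \<Longrightarrow> K i x \<le> K i b \<Longrightarrow> btw a b x"
    using I unfolding Inv_def by blast
  have oldUM: "\<And>i T. T \<subseteq> chn ch S c i \<Longrightarrow> T \<noteq> {} \<Longrightarrow> cvx (K i) (chn ch S c i) T \<Longrightarrow>
      \<exists>m\<in>T. \<forall>t\<in>T. t \<noteq> m \<longrightarrow> c t < c m"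
    using I unfolding Inv_def by blast
  have UM: "\<exists>m\<in>T. \<forall>t\<in>T. t \<noteq> m \<longrightarrow> c' t < c' m"
    if T1: "T \<subseteq> chn ch (S-{p}) c' i" and T2: "T \<noteq> {}" and T3: "cvx (K i) (chn ch (S-{p}) c' i) T" for i T
  proof -
    have T1': "T \<subseteq> chn ch S c i - {p}" using T1 chn' by simp
    have T3': "\<And>a b x. a \<in> T \<Longrightarrow> b \<in> T \<Longrightarrow> x \<in> chn ch S c i - {p} \<Longrightarrow> K i a \<le> K i x \<Longrightarrow> K i x \<le> K i b \<Longrightarrow> x \<in> T"
      using T3 chn' unfolding cvx_def by blast
    show ?thesis
    proof (cases "q \<in> T")
      case False
      have cv: "cvx (K i) (chn ch S c i) T"
        unfolding cvx_def
      proof (intro ballI impI)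
        fix a b x assume a: "a \<in> T" and b: "b \<in> T" and x: "x \<in> chn ch S c i"
          and ax: "K i a \<le> K i x" and xb: "K i x \<le> K i b"
        show "x \<in> T"
        proof (cases "x = p")
          case False then show ?thesis using T3' a b x ax xb by blast
        next
          case True
          then have ij: "i = j" using x unfolding chn_def j_def by blast
          have TA: "T \<subseteq> A" using T1' ij A_def by blast
          then have "A \<noteq> {}" using T2 by blast
          note nb = qA[OF this]
          have "K j a \<le> K j q" using nb a TA ax True ij by blast
          moreover have "K j q \<le> K j b" using nb b TA xb True ij by blast
          ultimately have "q \<in> T" using T3'[of a b q] a b nb ij A_def by blast
          then show ?thesis using \<open>q \<notin> T\<close> by blast
        qed
      qed
      obtain m where m: "m \<in> T" "\<forall>t\<in>T. t \<noteq> m \<longrightarrow> c t < c m"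
        using oldUM[OF _ T2 cv] T1' by blast
      have "\<forall>t\<in>T. c' t = c t" using False unfolding c'_def by auto
      then show ?thesis using m by metis
    next
      case True
      then have ij: "i = j" using T1' chq unfolding chn_def by blast
      have TA: "T \<subseteq> A" using T1' ij A_def by blast
      then have "A \<noteq> {}" using T2 by blast
      note nb = qA[OF this]
      have T3j: "\<And>a b x. a \<in> T \<Longrightarrow> b \<in> T \<Longrightarrow> x \<in> A \<Longrightarrow> K j a \<le> K j x \<Longrightarrow> K j x \<le> K j b \<Longrightarrow> x \<in> T"
        using T3' ij A_def by blast
      have cv: "cvx (K j) (chn ch S c j) (insert p T)"
        unfolding cvx_def
      proof (intro ballI impI)
        fix a b x assume a: "a \<in> insert p T" and b: "b \<in> insert p T" and x: "x \<in> chn ch S c j"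
          and ax: "K j a \<le> K j x" and xb: "K j x \<le> K j b"
        show "x \<in> insert p T"
        proof (cases "x = p")
          case True then show ?thesis by blast
        next
          case False
          then have xA: "x \<in> A" using x A_def by blast
          have l1: "a = p \<Longrightarrow> K j q \<le> K j x" using nb xA ax by blast
          have l2: "b = p \<Longrightarrow> K j x \<le> K j q" using nb xA xb by blast
          show ?thesis
          proof (cases "a = p")
            case ap: True
            show ?thesis
            proof (cases "b = p")
              case True
              then show ?thesis using T3j[of q q x] l1 l2 ap \<open>q \<in> T\<close> xA by auto
            next
              case False
              then show ?thesis using T3j[of q b x] l1 ap \<open>q \<in> T\<close> xA b xb by auto
            qed
          next
            case an: False
            show ?thesis
            proof (cases "b = p")
              case True
              then show ?thesis using T3j[of a q x] l2 an \<open>q \<in> T\<close> xA a ax by auto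
            next
              case False
              then show ?thesis using T3j[of a b x] an xA a b ax xb by auto
            qed
          qed
        qed
      qed
      have sub: "insert p T \<subseteq> chn ch S c j" using TA A_def pj by blast
      obtain m where m: "m \<in> insert p T" and mu: "\<forall>t\<in>insert p T. t \<noteq> m \<longrightarrow> c t < c m"
        using oldUM[OF sub _ cv] by blast
      have qp: "q \<noteq> p" using nb A_def by blast
      show ?thesis
      proof (cases "m = p")
        case True
        have cqp: "c q < c p" using mu True qp \<open>q \<in> T\<close> by blast
        have "c' q = c p" using cqp unfolding c'_def by simp
        moreover have "\<forall>t\<in>T. t \<noteq> q \<longrightarrow> c' t < c p"
          using mu True TA A_def unfolding c'_def by auto
        ultimately show ?thesis using \<open>q \<in> T\<close> by metis
      next
        case False
        then have mT: "m \<in> T" using m by blast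
        have cpm: "c p < c m" using mu False by (metis insertI1)
        have "c m \<le> c' m" unfolding c'_def by auto
        moreover have "\<forall>t\<in>T. t \<noteq> m \<longrightarrow> c' t < c m"
        proof (intro ballI impI)
          fix t assume t: "t \<in> T" "t \<noteq> m"
          have ctm: "c t < c m" using mu t by blast
          show "c' t < c m"
            using ctm cpm unfolding c'_def by (cases "t = q") auto
        qed
        ultimately show ?thesis using mT by (meson less_le_trans)
      qed
    qed
  qed
  have "Inv ch K (S-{p}) c'"
    unfolding Inv_def
  proof (intro conjI allI impI ballI)
    show "finite (S-{p})" using fS by simp
  next
    fix i a b x
    assume "a \<in> chn ch (S-{p}) c' i" "b \<in> chn ch (S-{p}) c' i" "x \<in> chn ch (S-{p}) c' i"
      "K i a \<le> K i x" "K i x \<le> K i b"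
    then show "btw a b x" using oldRC chn' by blast
  next
    fix i T
    assume "T \<subseteq> chn ch (S-{p}) c' i" "T \<noteq> {}" "cvx (K i) (chn ch (S-{p}) c' i) T"
    then show "\<exists>m\<in>T. \<forall>t\<in>T. t \<noteq> m \<longrightarrow> c' t < c' m" using UM by blast
  qed
  then show ?thesis using card img by blast
qed

lemma Inv_weak_del:
  "finite S \<Longrightarrow> Inv ch K S c \<Longrightarrow> card (c ` S) \<le> k \<Longrightarrow> weak_del k S c"
proof (induction S arbitrary: c rule: finite_psubset_induct)
  case (psubset S)
  show ?case
  proof (rule weak_del.intros)
    show "finite S" by fact
    show "conflict_free_rect S c" using Inv_cf psubset by blast
    show "card (c ` S) \<le> k" by fact
    show "\<forall>p\<in>S. \<exists>c'. card {q \<in> S - {p}. c' q \<noteq> c q} \<le> 1 \<and> weak_del k (S - {p}) c'"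
    proof
      fix p assume p: "p \<in> S"
      obtain c' where c': "card {x\<in>S-{p}. c' x \<noteq> c x} \<le> 1" "Inv ch K (S-{p}) c'" "c' ` (S-{p}) \<subseteq> c ` S"
        using Inv_del[OF psubset.prems(1) p] by blast
      have "card (c' ` (S-{p})) \<le> card (c ` S)" using c'(3) psubset.hyps(1) by (simp add: card_mono)
      then have "weak_del k (S-{p}) c'" using psubset.IH[of "S-{p}" c'] p c'(2) psubset.prems(2) by auto
      then show "\<exists>c'. card {q \<in> S - {p}. c' q \<noteq> c q} \<le> 1 \<and> weak_del k (S - {p}) c'" using c'(1) by blast
    qed
  qed
qed




fun tz :: "nat \<Rightarrow> nat" where
  "tz n = (if n = 0 \<or> odd n then 0 else Suc (tz (n div 2)))"

declare tz.simps[simp del]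

lemma tz_dvd: "2 ^ tz n dvd n"
proof (induction n rule: tz.induct)
  case (1 n)
  show ?case
  proof (cases "n = 0 \<or> odd n")
    case True then show ?thesis by (simp add: tz.simps)
  next
    case False
    then have e: "n = 2 * (n div 2)" by simp
    have "2 ^ tz (n div 2) dvd n div 2" using 1 False by blast
    then have "2 * 2 ^ tz (n div 2) dvd 2 * (n div 2)" by simp
    then show ?thesis using False e by (simp add: tz.simps)
  qed
qed

lemma tz_ndvd: "0 < n \<Longrightarrow> \<not> 2 ^ Suc (tz n) dvd n"
proof (induction n rule: tz.induct)
  case (1 n)
  show ?case
  proof (cases "odd n")
    case True
    then show ?thesis by (auto simp: tz.simps dvd_mult_left)
  next
    case False
    then have e: "n = 2 * (n div 2)" by simp
    have pos: "0 < n div 2" using 1(2) False by auto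
    have ih: "\<not> 2 ^ Suc (tz (n div 2)) dvd n div 2" using 1 False pos by auto
    have "tz n = Suc (tz (n div 2))" using False 1(2) by (simp add: tz.simps)
    moreover have "\<not> 2 * 2 ^ Suc (tz (n div 2)) dvd 2 * (n div 2)" using ih by simp
    ultimately show ?thesis using e by (metis power_Suc)
  qed
qed

lemma tz_ge: "0 < n \<Longrightarrow> 2 ^ w dvd n \<Longrightarrow> w \<le> tz n"
proof (rule ccontr)
  assume "0 < n" "2 ^ w dvd n" "\<not> w \<le> tz n"
  then have "(2::nat) ^ Suc (tz n) dvd 2 ^ w" by (intro le_imp_power_dvd) simp
  then show False using \<open>2 ^ w dvd n\<close> tz_ndvd[OF \<open>0 < n\<close>] dvd_trans by blast
qed

lemma tz_pow_le: "0 < n \<Longrightarrow> 2 ^ tz n \<le> n"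
  using tz_dvd by (simp add: dvd_imp_le)

lemma tz_between:
  assumes "0 < r1" "r1 < r2" "tz r1 = v" "tz r2 = v"
  shows "\<exists>r. r1 < r \<and> r < r2 \<and> v < tz r"
proof -
  obtain o1 where o1: "r1 = 2 ^ v * o1" using tz_dvd[of r1] assms by (auto elim: dvdE)
  obtain o2 where o2: "r2 = 2 ^ v * o2" using tz_dvd[of r2] assms by (auto elim: dvdE)
  have odd1: "odd o1"
  proof
    assume "even o1"
    then obtain k where "o1 = 2 * k" by blast
    then have "2 ^ Suc v dvd r1" using o1 by simp
    then show False using tz_ndvd[of r1] assms by simp
  qed
  have odd2: "odd o2"
  proof
    assume "even o2"
    then obtain k where "o2 = 2 * k" by blast
    then have "2 ^ Suc v dvd r2" using o2 by simp
    then show False using tz_ndvd[of r2] assms by simp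
  qed
  have "o1 < o2" using assms(2) o1 o2 by simp
  moreover have "o1 + 1 \<noteq> o2" using odd1 odd2 by auto
  ultimately have lt: "o1 + 1 < o2" by linarith
  have "even (o1 + 1)" using odd1 by simp
  then obtain k where k: "o1 + 1 = 2 * k" by (rule evenE)
  define r where "r = 2 ^ v * (o1 + 1)"
  have "r1 < r" unfolding r_def o1 by simp
  moreover have "r < r2" unfolding r_def o2 using lt by (intro mult_strict_left_mono) simp_all
  moreover have "2 ^ Suc v dvd r" unfolding r_def k by simp
  then have "Suc v \<le> tz r" using tz_ge[of r "Suc v"] unfolding r_def by simp
  ultimately show ?thesis by auto
qed

definition rk :: "point set \<Rightarrow> (point \<Rightarrow> real) \<Rightarrow> point \<Rightarrow> nat" where
  "rk A f x = card {y\<in>A. f y \<le> f x}"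

lemma rk_mono: "finite A \<Longrightarrow> f x \<le> f y \<Longrightarrow> rk A f x \<le> rk A f y"
  unfolding rk_def by (intro card_mono) auto

lemma rk_strict: assumes "finite A" "y \<in> A" "f x < f y" shows "rk A f x < rk A f y"
proof -
  have s1: "{z\<in>A. f z \<le> f x} \<subseteq> {z\<in>A. f z \<le> f y}" using assms by auto
  have s2: "y \<in> {z\<in>A. f z \<le> f y}" "y \<notin> {z\<in>A. f z \<le> f x}" using assms by auto
  have "{z\<in>A. f z \<le> f x} \<subset> {z\<in>A. f z \<le> f y}" using s1 s2 by blast
  then show ?thesis unfolding rk_def using assms(1) by (intro psubset_card_mono) auto
qed

lemma rk_range: "finite A \<Longrightarrow> x \<in> A \<Longrightarrow> 1 \<le> rk A f x \<and> rk A f x \<le> card A"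
proof -
  assume "finite A" "x \<in> A"
  have ne: "{y\<in>A. f y \<le> f x} \<noteq> {}" using \<open>x \<in> A\<close> by blast
  have fi: "finite {y\<in>A. f y \<le> f x}" using \<open>finite A\<close> by simp
  have "0 < rk A f x" unfolding rk_def using ne fi card_gt_0_iff by blast
  moreover have "rk A f x \<le> card A" unfolding rk_def using \<open>finite A\<close> by (intro card_mono) auto
  ultimately show ?thesis by simp
qed

lemma rk_inj: "finite A \<Longrightarrow> inj_on f A \<Longrightarrow> inj_on (rk A f) A"
proof (rule inj_onI)
  fix x y assume fA: "finite A" and inj: "inj_on f A" and x: "x \<in> A" and y: "y \<in> A" and e: "rk A f x = rk A f y"
  show "x = y"
  proof (rule ccontr)
    assume "x \<noteq> y"
    then have "f x \<noteq> f y" using inj x y unfolding inj_on_def by blast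
    then have "f x < f y \<or> f y < f x" by linarith
    then show False
    proof
      assume "f x < f y" then have "rk A f x < rk A f y" by (rule rk_strict[OF fA y])
      then show False using e by simp
    next
      assume "f y < f x" then have "rk A f y < rk A f x" by (rule rk_strict[OF fA x])
      then show False using e by simp
    qed
  qed
qed

lemma rk_onto: "finite A \<Longrightarrow> inj_on f A \<Longrightarrow> rk A f ` A = {1..card A}"
proof -
  assume fA: "finite A" and inj: "inj_on f A"
  have sub: "rk A f ` A \<subseteq> {1..card A}" using rk_range[OF fA] by auto
  have "card (rk A f ` A) = card A" using card_image[OF rk_inj[OF fA inj]] .
  then have "card (rk A f ` A) = card {1..card A}" by simp
  then show ?thesis using card_subset_eq[OF _ sub] by simp
qed

lemma ruler_step:
  assumes fA: "finite A" and inj: "inj_on f A" and TA: "T \<subseteq> A" and cv: "cvx f A T"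
    and a: "a \<in> T" and b: "b \<in> T" and lt: "rk A f a < rk A f b"
    and eq: "tz (rk A f a) = tz (rk A f b)"
  shows "\<exists>x\<in>T. tz (rk A f a) < tz (rk A f x)"
proof -
  have aA: "a \<in> A" using a TA by blast
  have bA: "b \<in> A" using b TA by blast
  have ra: "1 \<le> rk A f a" using rk_range[OF fA aA] by blast
  have rb: "rk A f b \<le> card A" using rk_range[OF fA bA] by blast
  have pa: "0 < rk A f a" using ra by simp
  obtain r where r: "rk A f a < r" "r < rk A f b" "tz (rk A f a) < tz r"
    using tz_between[OF pa lt refl eq[symmetric]] by blast
  have "r \<in> {1..card A}" using r ra rb by simp
  then have "r \<in> rk A f ` A" using rk_onto[OF fA inj] by simp
  then obtain x where x: "x \<in> A" "rk A f x = r" by blast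
  have "f a \<le> f x"
  proof (rule ccontr)
    assume "\<not> f a \<le> f x"
    then have "f x < f a" by simp
    then have "rk A f x < rk A f a" by (rule rk_strict[OF fA aA])
    then show False using r x by simp
  qed
  moreover have "f x \<le> f b"
  proof (rule ccontr)
    assume "\<not> f x \<le> f b"
    then have "f b < f x" by simp
    then have "rk A f b < rk A f x" by (rule rk_strict[OF fA x(1)])
    then show False using r x by simp
  qed
  ultimately have "x \<in> T" using cv a b x(1) unfolding cvx_def by blast
  then show ?thesis using r x by blast
qed

lemma ruler_um:
  assumes fA: "finite A" and inj: "inj_on f A" and TA: "T \<subseteq> A" and ne: "T \<noteq> {}" and cv: "cvx f A T"
  shows "\<exists>m\<in>T. \<forall>t\<in>T. t \<noteq> m \<longrightarrow> tz (rk A f t) < tz (rk A f m)"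
proof -
  define g where "g x = tz (rk A f x)" for x
  have fT: "finite T" using fA TA finite_subset by blast
  obtain m where m: "m \<in> T" "g m = Max (g ` T)"
    using fT ne by (metis (mono_tags, lifting) Max_in finite_imageI image_iff image_is_empty)
  have mx: "\<forall>x\<in>T. g x \<le> g m" using m fT by simp
  have "\<forall>t\<in>T. t \<noteq> m \<longrightarrow> g t < g m"
  proof (intro ballI impI)
    fix t assume t: "t \<in> T" "t \<noteq> m"
    show "g t < g m"
    proof (rule ccontr)
      assume "\<not> g t < g m"
      then have eq: "g t = g m" using mx t by force
      have "rk A f t \<noteq> rk A f m" using rk_inj[OF fA inj] t m TA by (meson inj_onD subsetD)
      then have "rk A f t < rk A f m \<or> rk A f m < rk A f t" by linarith
      then obtain x where "x \<in> T" "g m < g x"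
        using ruler_step[OF fA inj TA cv t(1) m(1)] ruler_step[OF fA inj TA cv m(1) t(1)] eq
        unfolding g_def by force
      then show False using mx by force
    qed
  qed
  then show ?thesis using m unfolding g_def by blast
qed




definition cmp :: "bool \<Rightarrow> point \<Rightarrow> point \<Rightarrow> bool" where
  "cmp d x y \<longleftrightarrow> fst x \<le> fst y \<and> (if d then snd x \<le> snd y else snd y \<le> snd x)"

definition incch :: "point set \<Rightarrow> bool" where
  "incch D \<longleftrightarrow> (\<forall>x\<in>D. \<forall>y\<in>D. cmp True x y \<or> cmp True y x)"

lemma cmp_refl: "cmp d x x" unfolding cmp_def by simp

lemma cmp_trans: "cmp d x y \<Longrightarrow> cmp d y z \<Longrightarrow> cmp d x z"
  unfolding cmp_def by (cases d) auto

lemma cmp_antisym: "cmp d x y \<Longrightarrow> cmp d y x \<Longrightarrow> x = y"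
  unfolding cmp_def by (cases d) (auto simp: prod_eq_iff)

lemma decomp:
  fixes s :: real
  assumes s: "1 \<le> s"
  shows "finite Q \<Longrightarrow> \<exists>r::nat. \<exists>g dir. real r \<le> real (card Q) / s + s \<and> (\<forall>x\<in>Q. g x < r) \<and>
           (\<forall>x\<in>Q. \<forall>y\<in>Q. g x = g y \<longrightarrow> cmp (dir (g x)) x y \<or> cmp (dir (g x)) y x)"
proof (induction Q rule: finite_psubset_induct)
  case (psubset Q)
  show ?case
  proof (cases "\<exists>D\<subseteq>Q. incch D \<and> s \<le> real (card D)")
    case True
    then obtain D where D: "D \<subseteq> Q" "incch D" "s \<le> real (card D)" by blast
    have fD: "finite D" using D psubset.hyps finite_subset by blast
    have "D \<noteq> {}" using D(3) s by auto
    then have DQ: "Q - D \<subset> Q" using D(1) by blast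
    obtain r g dir where IH: "real r \<le> real (card (Q-D)) / s + s" "\<forall>x\<in>Q-D. g x < r"
      "\<forall>x\<in>Q-D. \<forall>y\<in>Q-D. g x = g y \<longrightarrow> cmp (dir (g x)) x y \<or> cmp (dir (g x)) y x"
      using psubset.IH[OF DQ] by blast
    define g' where "g' x = (if x \<in> D then r else g x)" for x
    define dir' where "dir' = dir(r := True)"
    have cQD: "real (card (Q-D)) = real (card Q) - real (card D)"
      using card_Diff_subset[OF fD D(1)] card_mono[OF psubset.hyps D(1)] by simp
    have "real (card (Q-D)) / s \<le> (real (card Q) - s) / s"
      using cQD D(3) s by (intro divide_right_mono) auto
    also have "\<dots> = real (card Q) / s - 1" using s by (simp add: field_simps)
    finally have b1: "real (Suc r) \<le> real (card Q) / s + s" using IH(1) by simp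
    have b2: "\<forall>x\<in>Q. g' x < Suc r"
    proof
      fix x assume "x \<in> Q"
      then have "x \<notin> D \<Longrightarrow> g x < r" using IH(2) by blast
      then show "g' x < Suc r" unfolding g'_def by (simp add: less_SucI)
    qed
    have b3: "\<forall>x\<in>Q. \<forall>y\<in>Q. g' x = g' y \<longrightarrow> cmp (dir' (g' x)) x y \<or> cmp (dir' (g' x)) y x"
    proof (intro ballI impI)
      fix x y assume x: "x \<in> Q" and y: "y \<in> Q" and e: "g' x = g' y"
      show "cmp (dir' (g' x)) x y \<or> cmp (dir' (g' x)) y x"
      proof (cases "x \<in> D")
        case xD: True
        show ?thesis
        proof (cases "y \<in> D")
          case True
          then show ?thesis using xD D(2) unfolding incch_def g'_def dir'_def by simp
        next
          case False
          then have "g y < r" using IH(2) y by blast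
          then show ?thesis using e xD False unfolding g'_def by simp
        qed
      next
        case xD: False
        show ?thesis
        proof (cases "y \<in> D")
          case True
          then have "g x < r" using IH(2) x xD by blast
          then show ?thesis using e xD True unfolding g'_def by simp
        next
          case False
          then have "g x < r" using IH(2) x xD by blast
          then show ?thesis using IH(3) x y xD False e unfolding g'_def dir'_def by auto
        qed
      qed
    qed
    show ?thesis using b1 b2 b3 by blast
  next
    case False
    then have small: "\<And>D. D \<subseteq> Q \<Longrightarrow> incch D \<Longrightarrow> real (card D) < s" by force
    define H where "H x = {card D | D. D \<subseteq> Q \<and> incch D \<and> x \<in> D \<and> (\<forall>d\<in>D. cmp True d x)}" for x
    define ht where "ht x = Max (H x)" for x
    have fH: "finite (H x)" for x
    proof -
      have "H x \<subseteq> card ` Pow Q" unfolding H_def by blast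
      then show ?thesis using psubset.hyps finite_subset by blast
    qed
    have one: "1 \<in> H x" if "x \<in> Q" for x
    proof -
      have "incch {x}" unfolding incch_def using cmp_refl by blast
      then show ?thesis unfolding H_def using that cmp_refl by (intro CollectI exI[of _ "{x}"]) auto
    qed
    have htH: "ht x \<in> H x" if "x \<in> Q" for x
      unfolding ht_def using fH one[OF that] by (intro Max_in) auto
    have ht1: "1 \<le> ht x" if "x \<in> Q" for x
      unfolding ht_def using fH one[OF that] by (intro Max_ge) auto
    have hts: "real (ht x) < s" if xQ: "x \<in> Q" for x
    proof -
      obtain D where "ht x = card D" "D \<subseteq> Q" "incch D" using htH[OF xQ] unfolding H_def by blast
      then show ?thesis using small by simp
    qed
    have htm: "ht x < ht y" if x: "x \<in> Q" and y: "y \<in> Q" and xy: "cmp True x y" and ne: "x \<noteq> y" for x y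
    proof -
      obtain D where D: "ht x = card D" "D \<subseteq> Q" "incch D" "x \<in> D" "\<forall>d\<in>D. cmp True d x"
        using htH[OF x] unfolding H_def by blast
      have fD: "finite D" using D(2) psubset.hyps finite_subset by blast
      have yD: "y \<notin> D" using D(5) xy ne cmp_antisym by blast
      have dy: "\<forall>d\<in>D. cmp True d y" using D(5) xy cmp_trans by blast
      have "incch (insert y D)" using D(3) dy cmp_refl unfolding incch_def by blast
      moreover have "\<forall>d\<in>insert y D. cmp True d y" using dy cmp_refl by blast
      ultimately have "card (insert y D) \<in> H y" unfolding H_def using D(2) y by blast
      then have "card (insert y D) \<le> ht y" unfolding ht_def using fH by (intro Max_ge) auto
      then show ?thesis using D(1) fD yD by simp
    qed
    define r where "r = nat \<lceil>s\<rceil> - 1"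
    have rs: "real r \<le> s"
    proof -
      have "real_of_int \<lceil>s\<rceil> < s + 1" by linarith
      then show ?thesis unfolding r_def using s by linarith
    qed
    have b1: "real r \<le> real (card Q) / s + s" using rs s by (simp add: add_increasing)
    have b2: "\<forall>x\<in>Q. ht x - 1 < r"
    proof
      fix x assume x: "x \<in> Q"
      have "real (ht x) < real_of_int \<lceil>s\<rceil>" using hts[OF x] by linarith
      then have "int (ht x) < \<lceil>s\<rceil>" by linarith
      then show "ht x - 1 < r" unfolding r_def using ht1[OF x] by linarith
    qed
    have b3: "\<forall>x\<in>Q. \<forall>y\<in>Q. ht x - 1 = ht y - 1 \<longrightarrow> cmp False x y \<or> cmp False y x"
    proof (intro ballI impI)
      fix x y assume x: "x \<in> Q" and y: "y \<in> Q" and e: "ht x - 1 = ht y - 1"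
      have e': "ht x = ht y" using e ht1[OF x] ht1[OF y] by linarith
      show "cmp False x y \<or> cmp False y x"
      proof (cases "x = y")
        case True then show ?thesis using cmp_refl by blast
      next
        case False
        have "\<not> cmp True x y" using htm[OF x y] False e' by fastforce
        moreover have "\<not> cmp True y x" using htm[OF y x] False e' by fastforce
        ultimately show ?thesis unfolding cmp_def by auto
      qed
    qed
    show ?thesis
      using b1 b2 b3 by (intro exI[of _ r] exI[of _ "\<lambda>x. ht x - 1"] exI[of _ "\<lambda>_. False"]) auto
  qed
qed




lemma main_construct:
  assumes fP: "finite P" and n2: "card P \<ge> 2"
  shows "\<exists>k c. real k \<le> 4 / ln 2 * sqrt (real (card P)) * ln (real (card P)) \<and> weak_del k P c"
proof -
  define n where "n = card P"
  have n2': "2 \<le> n" using n2 n_def by simp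
  define s where "s = sqrt (real n)"
  have s1: "1 \<le> s" unfolding s_def using n2' by simp
  obtain r g dir where D: "real r \<le> real (card P) / s + s" "\<forall>x\<in>P. g x < r"
    "\<forall>x\<in>P. \<forall>y\<in>P. g x = g y \<longrightarrow> cmp (dir (g x)) x y \<or> cmp (dir (g x)) y x"
    using decomp[OF s1 fP] by blast
  have "real (card P) / s = s" unfolding s_def n_def by (simp add: real_div_sqrt)
  then have r2: "real r \<le> 2 * s" using D(1) by simp
  define K :: "nat \<Rightarrow> point \<Rightarrow> real" where "K j x = (if dir j then fst x + snd x else fst x - snd x)" for j x
  define Ch where "Ch j = {x\<in>P. g x = j}" for j
  define B where "B = n + 1"
  define c where "c x = g x * B + tz (rk (Ch (g x)) (K (g x)) x)" for x
  define ch where "ch col = col div B" for col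
  have fCh: "finite (Ch j)" for j unfolding Ch_def using fP by simp
  have cardCh: "card (Ch j) \<le> n" for j unfolding Ch_def n_def using fP by (intro card_mono) auto
  have Kcmp: "cmp (dir j) x y" if x: "x \<in> Ch j" and y: "y \<in> Ch j" and le: "K j x \<le> K j y" for j x y
  proof -
    have "cmp (dir j) x y \<or> cmp (dir j) y x" using D(3) x y unfolding Ch_def by auto
    then show ?thesis using le by (cases "dir j") (auto simp: cmp_def K_def)
  qed
  have Kinj: "inj_on (K j) (Ch j)" for j
  proof (rule inj_onI)
    fix x y assume "x \<in> Ch j" "y \<in> Ch j" "K j x = K j y"
    then show "x = y" using Kcmp[of x j y] Kcmp[of y j x] cmp_antisym by simp
  qed
  have rkr: "1 \<le> rk (Ch (g x)) (K (g x)) x \<and> rk (Ch (g x)) (K (g x)) x \<le> n" if "x \<in> P" for x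
  proof -
    have "x \<in> Ch (g x)" using that unfolding Ch_def by simp
    then show ?thesis using rk_range[OF fCh, of x "g x" "K (g x)"] cardCh[of "g x"] by linarith
  qed
  have tzb: "2 ^ tz (rk (Ch (g x)) (K (g x)) x) \<le> n" if "x \<in> P" for x
    using tz_pow_le[of "rk (Ch (g x)) (K (g x)) x"] rkr[OF that] by linarith
  have tzB: "tz (rk (Ch (g x)) (K (g x)) x) < B" if "x \<in> P" for x
  proof -
    have "tz (rk (Ch (g x)) (K (g x)) x) < 2 ^ tz (rk (Ch (g x)) (K (g x)) x)" by (rule less_exp)
    then show ?thesis using tzb[OF that] unfolding B_def by linarith
  qed
  have chc: "ch (c x) = g x" if "x \<in> P" for x
  proof -
    have Bp: "B \<noteq> 0" unfolding B_def by simp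
    have "(tz (rk (Ch (g x)) (K (g x)) x) + g x * B) div B = g x + tz (rk (Ch (g x)) (K (g x)) x) div B"
      using div_mult_self1[OF Bp] by blast
    then show ?thesis unfolding ch_def c_def using tzB[OF that] by (simp add: add.commute)
  qed
  have chnE: "chn ch P c j = Ch j" for j unfolding chn_def Ch_def using chc by auto
  have Inv: "Inv ch K P c"
    unfolding Inv_def chnE
  proof (intro conjI allI impI ballI)
    show "finite P" by fact
  next
    fix j a b x assume a: "a \<in> Ch j" and b: "b \<in> Ch j" and x: "x \<in> Ch j"
      and ax: "K j a \<le> K j x" and xb: "K j x \<le> K j b"
    have c1: "cmp (dir j) a x" using Kcmp[OF a x ax] .
    have c2: "cmp (dir j) x b" using Kcmp[OF x b xb] .
    show "btw a b x" using c1 c2 unfolding btw_def rect_def cmp_def by (cases "dir j") auto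
  next
    fix j T assume T1: "T \<subseteq> Ch j" and T2: "T \<noteq> {}" and T3: "cvx (K j) (Ch j) T"
    obtain m where m: "m \<in> T" "\<forall>t\<in>T. t \<noteq> m \<longrightarrow> tz (rk (Ch j) (K j) t) < tz (rk (Ch j) (K j) m)"
      using ruler_um[OF fCh Kinj T1 T2 T3] by blast
    have "\<forall>t\<in>T. t \<noteq> m \<longrightarrow> c t < c m"
    proof (intro ballI impI)
      fix t assume t: "t \<in> T" "t \<noteq> m"
      have "g t = j" "g m = j" using t m T1 unfolding Ch_def by auto
      then show "c t < c m" using m t unfolding c_def by simp
    qed
    then show "\<exists>m\<in>T. \<forall>t\<in>T. t \<noteq> m \<longrightarrow> c t < c m" using m by blast
  qed
  define k where "k = card (c ` P)"
  have wd: "weak_del k P c" using Inv_weak_del[OF fP Inv] k_def by simp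
  define L where "L = nat \<lfloor>log 2 (real n)\<rfloor>"
  have logn: "1 \<le> log 2 (real n)" using n2' by simp
  have img: "c ` P \<subseteq> (\<lambda>(j, v). j * B + v) ` ({..<r} \<times> {..L})"
  proof
    fix y assume "y \<in> c ` P"
    then obtain x where x: "x \<in> P" "y = c x" by blast
    have "real (tz (rk (Ch (g x)) (K (g x)) x)) \<le> log 2 (real n)"
      using le_log2_of_power[OF tzb[OF x(1)]] .
    then have "tz (rk (Ch (g x)) (K (g x)) x) \<le> L" unfolding L_def by linarith
    moreover have "g x < r" using D(2) x by blast
    ultimately show "y \<in> (\<lambda>(j, v). j * B + v) ` ({..<r} \<times> {..L})"
      unfolding x(2) c_def by force
  qed
  have "k \<le> card ((\<lambda>(j, v). j * B + v) ` ({..<r} \<times> {..L}))"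
    unfolding k_def using img by (intro card_mono) auto
  also have "\<dots> \<le> card ({..<r} \<times> {..L})" by (rule card_image_le) simp
  also have "\<dots> = r * (L + 1)" by (simp add: card_cartesian_product)
  finally have kb: "real k \<le> real r * (real L + 1)"
    by (metis of_nat_1 of_nat_add of_nat_le_iff of_nat_mult)
  have Lb: "real L \<le> log 2 (real n)" unfolding L_def using logn by linarith
  have "real k \<le> (2 * s) * (2 * log 2 (real n))"
  proof -
    have "real r * (real L + 1) \<le> (2 * s) * (2 * log 2 (real n))"
      using r2 Lb logn s1 by (intro mult_mono) auto
    then show ?thesis using kb by linarith
  qed
  also have "\<dots> = 4 / ln 2 * sqrt (real (card P)) * ln (real (card P))"
    unfolding s_def n_def log_def by simp
  finally show ?thesis using wd by blast
qed

theorem mainTheorem13: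
  shows "\<exists>C > 0. \<forall>P :: point set. finite P \<and> card P \<ge> 2 \<longrightarrow>
           (\<exists>k c. real k \<le> C * sqrt (real (card P)) * ln (real (card P)) \<and> weak_del k P c)"
proof (intro exI[of _ "4 / ln 2"] conjI allI impI)
  show "(0::real) < 4 / ln 2" by simp
next
  fix P :: "point set" assume "finite P \<and> card P \<ge> 2"
  then show "\<exists>k c. real k \<le> 4 / ln 2 * sqrt (real (card P)) * ln (real (card P)) \<and> weak_del k P c"
    using main_construct by blast
qed


end
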